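(* Let $n\in\mathbb{N}$. If $2\mid n$ then $K_{n/2,n/2}\subseteq K_{n,n}$. If $3\mid n$ then $K_{n/3,n/3}\subseteq K_{n,n}$.
   Context: Thompson's group $F$ is the group of piecewise linear homeomorphisms of $[0,1]$ with finitely many dyadic breakpoints and slopes integer powers of $2$. An element $h\in F$ has the pair of branches $u\rightarrow v$ (for finite binary words $u,v$) if $h(.u\alpha)=.v\alpha$ for every infinite binary word $\alpha$. For $H\le F$ write $u\sim_H v$ if some $h\in H$ has the pair of branches $u\rightarrow v$. The closure $\mathrm{Cl}(H)$ is the subgroup of all $f\in F$ for which there is a finite subdivision of $[0,1]$ into intervals on each of which $f$ coincides with some element of $H$; $H$ is closed if $H=\mathrm{Cl}(H)$ (intersections of closed subgroups are closed). For $p\in\mathbb{N}$, $K_{p,p}$ is the minimal closed subgroup $K$ of $F$ such that: (a) $0^k1\sim_K 0^{k+p}1$ for all $k\in\mathbb{N}$; (b) $1^k0\sim_K 1^{k+p}0$ for all $k\in\mathbb{N}$; (c) $0^k1\sim_K 1^{p+1-k}0$ for $1\le k\le p$; (d) $0^{2k}10\sim_K 1^{1+3(p-k)}0$ for $1\le k\le p$; (e) $0^{2k}11\sim_K 1^{2+3(p-k)}0$ for $1\le k\le p$; (f) $0^{2k-1}1\sim_K 1^{3(p-k+1)}0$ for $1\le k\le p$. *)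

theory Defs
  imports Complex_Main
begin

definition dyadic :: "real \<Rightarrow> bool" where
  "dyadic x \<longleftrightarrow> (\<exists>(a::int) (k::nat). x = of_int a / 2 ^ k)"

definition subdivision :: "real list \<Rightarrow> bool" where
  "subdivision xs \<longleftrightarrow> xs \<noteq> [] \<and> hd xs = 0 \<and> last xs = 1 \<and> sorted_wrt (<) xs"

definition thompsonF :: "(real \<Rightarrow> real) set" where
  "thompsonF = {f. (\<forall>x. x \<notin> {0..1} \<longrightarrow> f x = x) \<and> bij_betw f {0..1} {0..1} \<and>
     (\<exists>xs. subdivision xs \<and> (\<forall>x\<in>set xs. dyadic x) \<and>
        (\<forall>i < length xs - 1. \<exists>(k::int) (b::real).
            \<forall>x\<in>{xs!i..xs!Suc i}. f x = 2 powi k * x + b))}"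

definition subgroupF :: "(real \<Rightarrow> real) set \<Rightarrow> bool" where
  "subgroupF H \<longleftrightarrow> H \<subseteq> thompsonF \<and> id \<in> H \<and>
     (\<forall>f\<in>H. \<forall>g\<in>H. f \<circ> g \<in> H) \<and> (\<forall>f\<in>H. inv f \<in> H)"

definition ClF :: "(real \<Rightarrow> real) set \<Rightarrow> (real \<Rightarrow> real) set" where
  "ClF H = {f \<in> thompsonF. \<exists>xs. subdivision xs \<and>
     (\<forall>i < length xs - 1. \<exists>h\<in>H. \<forall>x\<in>{xs!i..xs!Suc i}. f x = h x)}"

definition closedF :: "(real \<Rightarrow> real) set \<Rightarrow> bool" where
  "closedF H \<longleftrightarrow> H = ClF H"

text \<open>Binary words: True = 1, False = 0.  Value .w of an infinite binary word,
  and concatenation u alpha of a finite word with an infinite one.\<close>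
definition binval :: "(nat \<Rightarrow> bool) \<Rightarrow> real" where
  "binval \<alpha> = (\<Sum>i. if \<alpha> i then 1 / 2 ^ Suc i else 0)"

definition wcat :: "bool list \<Rightarrow> (nat \<Rightarrow> bool) \<Rightarrow> nat \<Rightarrow> bool" where
  "wcat u \<alpha> = (\<lambda>i. if i < length u then u ! i else \<alpha> (i - length u))"

definition has_branch_pair :: "(real \<Rightarrow> real) \<Rightarrow> bool list \<Rightarrow> bool list \<Rightarrow> bool" where
  "has_branch_pair h u v \<longleftrightarrow> (\<forall>\<alpha>. h (binval (wcat u \<alpha>)) = binval (wcat v \<alpha>))"

definition simH :: "(real \<Rightarrow> real) set \<Rightarrow> bool list \<Rightarrow> bool list \<Rightarrow> bool" where
  "simH H u v \<longleftrightarrow> (\<exists>h\<in>H. has_branch_pair h u v)"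

abbreviation zeros :: "nat \<Rightarrow> bool list" where "zeros k \<equiv> replicate k False"
abbreviation ones :: "nat \<Rightarrow> bool list" where "ones k \<equiv> replicate k True"

text \<open>Conditions (a)-(f); here \<nat> = {1,2,...} (k = 0 in (a) would make the
  condition unsatisfiable).\<close>
definition Kconds :: "nat \<Rightarrow> (real \<Rightarrow> real) set \<Rightarrow> bool" where
  "Kconds p K \<longleftrightarrow>
     (\<forall>k\<ge>1. simH K (zeros k @ [True]) (zeros (k + p) @ [True])) \<and>
     (\<forall>k\<ge>1. simH K (ones k @ [False]) (ones (k + p) @ [False])) \<and>
     (\<forall>k. 1 \<le> k \<and> k \<le> p \<longrightarrow> simH K (zeros k @ [True]) (ones (p + 1 - k) @ [False])) \<and>
     (\<forall>k. 1 \<le> k \<and> k \<le> p \<longrightarrow> simH K (zeros (2*k) @ [True, False]) (ones (1 + 3*(p - k)) @ [False])) \<and>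
     (\<forall>k. 1 \<le> k \<and> k \<le> p \<longrightarrow> simH K (zeros (2*k) @ [True, True]) (ones (2 + 3*(p - k)) @ [False])) \<and>
     (\<forall>k. 1 \<le> k \<and> k \<le> p \<longrightarrow> simH K (zeros (2*k - 1) @ [True]) (ones (3*(p - k + 1)) @ [False]))"

definition Kpp :: "nat \<Rightarrow> (real \<Rightarrow> real) set" where
  "Kpp p = \<Inter>{K. subgroupF K \<and> closedF K \<and> Kconds p K}"

end

theory Submission
  imports Defs
begin

lemma inj_gen:
  assumes out: "\<And>z. z \<notin> S \<Longrightarrow> f z = z" and bij: "bij_betw f S S"
  shows "inj f"
proof (rule injI)
  fix x y assume e: "f x = f y"
  have io: "inj_on f S" using bij unfolding bij_betw_def by (rule conjunct1)
  have img: "\<And>z. z \<in> S \<Longrightarrow> f z \<in> S" using bij bij_betwE by blast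
  show "x = y"
  proof (cases "x \<in> S")
    case xin: True
    show ?thesis
    proof (cases "y \<in> S")
      case True
      show ?thesis by (rule inj_onD[OF io e xin True])
    next
      case False
      have "f x \<in> S" using img[OF xin] .
      then have "f y \<in> S" using e by simp
      then have "y \<in> S" using out[OF False] by simp
      with False show ?thesis by blast
    qed
  next
    case xout: False
    show ?thesis
    proof (cases "y \<in> S")
      case True
      have "f y \<in> S" using img[OF True] .
      then have "f x \<in> S" using e by simp
      then have "x \<in> S" using out[OF xout] by simp
      with xout show ?thesis by blast
    next
      case False
      have "x = f x" using out[OF xout] by simp
      also have "\<dots> = f y" by (rule e)
      also have "\<dots> = y" using out[OF False] .
      finally show ?thesis .
    qed
  qed
qed
lemma thompsonF_inj:
  assumes "f \<in> thompsonF" shows "inj f"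
proof -
  have out: "\<And>z. z \<notin> {0..1::real} \<Longrightarrow> f z = z" and bij: "bij_betw f {0..1} {0..1}"
    using assms unfolding thompsonF_def by auto
  show ?thesis by (rule inj_gen[OF out bij])
qed

lemma sim_refl: "subgroupF K \<Longrightarrow> simH K u u"
  unfolding subgroupF_def simH_def has_branch_pair_def by (metis id_apply)

lemma sim_sym: assumes "subgroupF K" "simH K u v" shows "simH K v u"
proof -
  obtain h where h: "h \<in> K" "has_branch_pair h u v" using assms(2) unfolding simH_def by blast
  have "h \<in> thompsonF" using assms(1) h(1) unfolding subgroupF_def by blast
  then have ij: "inj h" by (rule thompsonF_inj)
  have "inv h \<in> K" using assms(1) h(1) unfolding subgroupF_def by blast
  moreover have "has_branch_pair (inv h) v u"
    unfolding has_branch_pair_def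
    by (simp add: h(2)[unfolded has_branch_pair_def, rule_format, symmetric] inv_f_f[OF ij])
  ultimately show ?thesis unfolding simH_def by blast
qed

lemma sim_trans: assumes "subgroupF K" "simH K u v" "simH K v w" shows "simH K u w"
proof -
  obtain h where h: "h \<in> K" "has_branch_pair h u v" using assms(2) unfolding simH_def by blast
  obtain g where g: "g \<in> K" "has_branch_pair g v w" using assms(3) unfolding simH_def by blast
  have "g \<circ> h \<in> K" using assms(1) h(1) g(1) unfolding subgroupF_def by blast
  moreover have "has_branch_pair (g \<circ> h) u w"
    using h(2) g(2) unfolding has_branch_pair_def by simp
  ultimately show ?thesis unfolding simH_def by blast
qed

lemma wcat_append: "wcat (u @ w) \<alpha> = wcat u (wcat w \<alpha>)"
  unfolding wcat_def by (auto simp: nth_append fun_eq_iff)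

lemma sim_ext: assumes "simH K u v" shows "simH K (u @ w) (v @ w)"
  using assms unfolding simH_def has_branch_pair_def by (metis wcat_append)


abbreviation AA :: "nat \<Rightarrow> bool list" where "AA k \<equiv> zeros k @ [True]"
abbreviation BB :: "nat \<Rightarrow> bool list" where "BB k \<equiv> ones k @ [False]"

lemma shift_gen:
  assumes sg: "subgroupF K" and h1: "1 \<le> h"
    and st: "\<And>y. 1 \<le> y \<Longrightarrow> simH K (W y) (W (y + h))"
    and x1: "1 \<le> x" and y1: "1 \<le> y" and d: "int h dvd (int x - int y)"
  shows "simH K (W x) (W y)"
proof -
  have it: "simH K (W x) (W (x + c * h))" if "1 \<le> x" for x c
  proof (induction c)
    case 0
    then show ?case using sim_refl[OF sg] by simp
  next
    case (Suc c)
    have st': "simH K (W (x + c * h)) (W (x + c * h + h))" using st that by simp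
    have eq: "x + Suc c * h = x + c * h + h" by simp
    show ?case unfolding eq by (rule sim_trans[OF sg Suc.IH st'])
  qed
  obtain c where c: "int x - int y = int h * c" using d by (auto simp: dvd_def)
  show ?thesis
  proof (cases "x \<le> y")
    case True
    then have "int h * (- c) \<ge> 0" using c by simp
    then have nc: "- c \<ge> 0" using h1 by (simp add: zero_le_mult_iff mult_le_0_iff)
    have "int y = int x + int h * (- c)" using c by simp
    also have "\<dots> = int (x + nat (- c) * h)" using nc by simp
    finally have "y = x + nat (- c) * h" by (simp only: of_nat_eq_iff)
    then show ?thesis using it[OF x1] by simp
  next
    case False
    then have "int h * c \<ge> 0" using c by simp
    then have nc: "c \<ge> 0" using h1 by (simp add: zero_le_mult_iff mult_le_0_iff)
    have "int x = int y + int h * c" using c by simp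
    also have "\<dots> = int (y + nat c * h)" using nc by simp
    finally have "x = y + nat c * h" by (simp only: of_nat_eq_iff)
    then show ?thesis using it[OF y1] sim_sym[OF sg] by metis
  qed
qed

definition perd :: "(real \<Rightarrow> real) set \<Rightarrow> nat \<Rightarrow> bool" where
  "perd K m \<longleftrightarrow> (\<forall>x y. 1 \<le> x \<longrightarrow> 1 \<le> y \<longrightarrow> int m dvd (int x - int y) \<longrightarrow> simH K (AA x) (AA y))"

lemma perd_shift:
  assumes sg: "subgroupF K" and h1: "1 \<le> h"
    and st: "\<And>y. 1 \<le> y \<Longrightarrow> simH K (AA y) (AA (y + h))"
  shows "perd K h"
  unfolding perd_def using shift_gen[OF sg h1, of AA] st by blast

lemma perd_mult:
  assumes "perd K m" shows "perd K (c * m)"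
  using assms unfolding perd_def by (metis dvd_mult_right of_nat_mult)

lemma perdD:
  assumes "perd K m" "1 \<le> x" "1 \<le> y" "int m dvd (int x - int y)"
  shows "simH K (AA x) (AA y)"
  using assms unfolding perd_def by blast

locale kctx =
  fixes K :: "(real \<Rightarrow> real) set" and p :: nat
  assumes sg: "subgroupF K" and kc: "Kconds p K" and p1: "1 \<le> p"
begin

abbreviation R where "R \<equiv> simH K"

lemma rsym: "R u v \<Longrightarrow> R v u" by (rule sim_sym[OF sg])
lemma rtrans: "R u v \<Longrightarrow> R v w \<Longrightarrow> R u w" by (rule sim_trans[OF sg])

lemma kc': "(\<forall>k\<ge>1. R (zeros k @ [True]) (zeros (k + p) @ [True])) \<and>
     (\<forall>k\<ge>1. R (ones k @ [False]) (ones (k + p) @ [False])) \<and>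
     (\<forall>k. 1 \<le> k \<and> k \<le> p \<longrightarrow> R (zeros k @ [True]) (ones (p + 1 - k) @ [False])) \<and>
     (\<forall>k. 1 \<le> k \<and> k \<le> p \<longrightarrow> R (zeros (2*k) @ [True, False]) (ones (1 + 3*(p - k)) @ [False])) \<and>
     (\<forall>k. 1 \<le> k \<and> k \<le> p \<longrightarrow> R (zeros (2*k) @ [True, True]) (ones (2 + 3*(p - k)) @ [False])) \<and>
     (\<forall>k. 1 \<le> k \<and> k \<le> p \<longrightarrow> R (zeros (2*k - 1) @ [True]) (ones (3*(p - k + 1)) @ [False]))"
  using kc unfolding Kconds_def .

lemma kca: "1 \<le> k \<Longrightarrow> R (AA k) (AA (k + p))"
  using conjunct1[OF kc'] by blast
lemma kcb: "1 \<le> k \<Longrightarrow> R (BB k) (BB (k + p))"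
  using conjunct1[OF conjunct2[OF kc']] by blast
lemma kcc: "1 \<le> k \<Longrightarrow> k \<le> p \<Longrightarrow> R (AA k) (BB (p + 1 - k))"
  using conjunct1[OF conjunct2[OF conjunct2[OF kc']]] by blast
lemma kcd: "1 \<le> k \<Longrightarrow> k \<le> p \<Longrightarrow> R (AA (2*k) @ [False]) (BB (1 + 3*(p - k)))"
  using conjunct1[OF conjunct2[OF conjunct2[OF conjunct2[OF kc']]]] by simp
lemma kce: "1 \<le> k \<Longrightarrow> k \<le> p \<Longrightarrow> R (AA (2*k) @ [True]) (BB (2 + 3*(p - k)))"
  using conjunct1[OF conjunct2[OF conjunct2[OF conjunct2[OF conjunct2[OF kc']]]]] by simp
lemma kcf: "1 \<le> k \<Longrightarrow> k \<le> p \<Longrightarrow> R (AA (2*k - 1)) (BB (3*(p - k + 1)))"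
  using conjunct2[OF conjunct2[OF conjunct2[OF conjunct2[OF conjunct2[OF kc']]]]] by blast

lemma perA: "perd K p" by (rule perd_shift[OF sg p1 kca])

lemma perB: "1 \<le> x \<Longrightarrow> 1 \<le> y \<Longrightarrow> int p dvd (int x - int y) \<Longrightarrow> R (BB x) (BB y)"
  by (rule shift_gen[OF sg p1, of BB, OF kcb])

lemma red: assumes k: "1 \<le> k"
  obtains k0 where "1 \<le> k0" "k0 \<le> p" "int p dvd (int k - int k0)"
proof -
  define k0 where "k0 = (k - 1) mod p + 1"
  have "(k - 1) mod p < p" using p1 by simp
  then have a: "1 \<le> k0" "k0 \<le> p" unfolding k0_def by auto
  have eq: "k = p * ((k - 1) div p) + k0" unfolding k0_def
    using k mult_div_mod_eq[of p "k - 1"] by linarith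
  have "int k = int (p * ((k - 1) div p)) + int k0" using eq by (metis of_nat_add)
  then have "int k - int k0 = int p * int ((k - 1) div p)" by simp
  then have "int p dvd (int k - int k0)" by simp
  with a show ?thesis using that by blast
qed

lemma AB:
  assumes x1: "1 \<le> x" and j1: "1 \<le> j" and d: "p dvd (x + j - 1)"
  shows "R (AA x) (BB j)"
proof -
  obtain k0 where k0: "1 \<le> k0" "k0 \<le> p" "int p dvd (int x - int k0)" using red x1 by blast
  have 1: "R (AA x) (AA k0)" using perdD[OF perA x1 k0(1) k0(3)] .
  have 2: "R (AA k0) (BB (p + 1 - k0))" using kcc k0 by blast
  have e: "int (p + 1 - k0) - int j = int p - int (x + j - 1) + (int x - int k0)"
    using k0 x1 j1 by (simp add: of_nat_diff)
  have "int p dvd int (x + j - 1)" using d by simp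
  then have "int p dvd (int (p + 1 - k0) - int j)" unfolding e
    using k0(3) by (simp add: dvd_add dvd_diff)
  then have 3: "R (BB (p + 1 - k0)) (BB j)" using perB j1 k0 by simp
  show ?thesis using rtrans[OF 1 rtrans[OF 2 3]] .
qed

lemma dvdI': "int a - int b = int m * c \<Longrightarrow> int m dvd (int a - int b)" by simp

lemma F2:
  assumes k: "1 \<le> k" shows "R (AA (2*k - 1)) (AA (3*k - 2))"
proof -
  obtain k0 where k0: "1 \<le> k0" "k0 \<le> p" "int p dvd (int k - int k0)" using red k by blast
  obtain c where c: "int k - int k0 = int p * c" using k0(3) by (auto simp: dvd_def)
  have e1: "int (2*k - 1) - int (2*k0 - 1) = int p * (2 * c)" using k k0 c by (simp add: of_nat_diff)
  have 1: "R (AA (2*k - 1)) (AA (2*k0 - 1))"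
    by (rule perdD[OF perA _ _ dvdI'[OF e1]]) (use k k0 in auto)
  have 2: "R (AA (2*k0 - 1)) (BB (3*(p - k0 + 1)))" using kcf k0 by blast
  have s3: "3*k0 - 2 + 3*(p - k0 + 1) - 1 = p * 3" using k0 by simp
  have 3: "R (AA (3*k0 - 2)) (BB (3*(p - k0 + 1)))"
    by (rule AB) (use k0 s3 in auto)
  have e4: "int (3*k0 - 2) - int (3*k - 2) = int p * (- 3 * c)" using k k0 c by (simp add: of_nat_diff)
  have 4: "R (AA (3*k0 - 2)) (AA (3*k - 2))"
    by (rule perdD[OF perA _ _ dvdI'[OF e4]]) (use k k0 in auto)
  show ?thesis using rtrans[OF 1 rtrans[OF 2 rtrans[OF rsym[OF 3] 4]]] .
qed

lemma F3a:
  assumes k: "1 \<le> k" shows "R (AA (2*k) @ [False]) (AA (3*k))"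
proof -
  obtain k0 where k0: "1 \<le> k0" "k0 \<le> p" "int p dvd (int k - int k0)" using red k by blast
  obtain c where c: "int k - int k0 = int p * c" using k0(3) by (auto simp: dvd_def)
  have e1: "int (2*k) - int (2*k0) = int p * (2 * c)" using k k0 c by (simp add: of_nat_diff)
  have 1: "R (AA (2*k)) (AA (2*k0))"
    by (rule perdD[OF perA _ _ dvdI'[OF e1]]) (use k k0 in auto)
  have one': "R (AA (2*k) @ [False]) (AA (2*k0) @ [False])" by (rule sim_ext[OF 1])
  have 2: "R (AA (2*k0) @ [False]) (BB (1 + 3*(p - k0)))" using kcd k0 by blast
  have s3: "3*k0 + (1 + 3*(p - k0)) - 1 = p * 3" using k0 by simp
  have 3: "R (AA (3*k0)) (BB (1 + 3*(p - k0)))"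
    by (rule AB) (use k0 s3 in auto)
  have e4: "int (3*k0) - int (3*k) = int p * (- 3 * c)" using k k0 c by (simp add: of_nat_diff)
  have 4: "R (AA (3*k0)) (AA (3*k))"
    by (rule perdD[OF perA _ _ dvdI'[OF e4]]) (use k k0 in auto)
  show ?thesis using rtrans[OF one' rtrans[OF 2 rtrans[OF rsym[OF 3] 4]]] .
qed

lemma F3b:
  assumes k: "1 \<le> k" shows "R (AA (2*k) @ [True]) (AA (3*k - 1))"
proof -
  obtain k0 where k0: "1 \<le> k0" "k0 \<le> p" "int p dvd (int k - int k0)" using red k by blast
  obtain c where c: "int k - int k0 = int p * c" using k0(3) by (auto simp: dvd_def)
  have e1: "int (2*k) - int (2*k0) = int p * (2 * c)" using k k0 c by (simp add: of_nat_diff)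
  have 1: "R (AA (2*k)) (AA (2*k0))"
    by (rule perdD[OF perA _ _ dvdI'[OF e1]]) (use k k0 in auto)
  have one': "R (AA (2*k) @ [True]) (AA (2*k0) @ [True])" by (rule sim_ext[OF 1])
  have 2: "R (AA (2*k0) @ [True]) (BB (2 + 3*(p - k0)))" using kce k0 by blast
  have s3: "3*k0 - 1 + (2 + 3*(p - k0)) - 1 = p * 3" using k0 by simp
  have 3: "R (AA (3*k0 - 1)) (BB (2 + 3*(p - k0)))"
    by (rule AB) (use k0 s3 in auto)
  have e4: "int (3*k0 - 1) - int (3*k - 1) = int p * (- 3 * c)" using k k0 c by (simp add: of_nat_diff)
  have 4: "R (AA (3*k0 - 1)) (AA (3*k - 1))"
    by (rule perdD[OF perA _ _ dvdI'[OF e4]]) (use k k0 in auto)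
  show ?thesis using rtrans[OF one' rtrans[OF 2 rtrans[OF rsym[OF 3] 4]]] .
qed

lemma L1:
  assumes per: "perd K (2*h)" and h1: "1 \<le> h" shows "perd K h"
proof (rule perd_shift[OF sg h1])
  fix y :: nat assume y: "1 \<le> y"
  define k where "k = (y + 2) div 3"
  have k1: "1 \<le> k" using y unfolding k_def by presburger
  have cs: "y = 3*k - 2 \<or> y = 3*k - 1 \<or> y = 3*k" unfolding k_def by presburger
  show "R (AA y) (AA (y + h))"
  proof -
    { assume yy: "y = 3*k - 2"
      have a: "R (AA (2*k - 1)) (AA (3*k - 2))" by (rule F2[OF k1])
      have eb: "int (2*k - 1) - int (2*(k+h) - 1) = int (2*h) * (- 1)" using k1 h1 by (simp add: of_nat_diff)
      have b: "R (AA (2*k - 1)) (AA (2*(k+h) - 1))"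
        by (rule perdD[OF per _ _ dvdI'[OF eb]]) (use k1 h1 in auto)
      have c: "R (AA (2*(k+h) - 1)) (AA (3*(k+h) - 2))" by (rule F2) (use k1 in auto)
      have ed: "int (3*(k+h) - 2) - int (3*k - 2 + h) = int (2*h) * 1" using k1 h1 by (simp add: of_nat_diff)
      have d: "R (AA (3*(k+h) - 2)) (AA (3*k - 2 + h))"
        by (rule perdD[OF per _ _ dvdI'[OF ed]]) (use k1 h1 in auto)
      have ?thesis using rtrans[OF rsym[OF a] rtrans[OF b rtrans[OF c d]]] yy by simp }
    moreover
    { assume yy: "y = 3*k - 1"
      have a: "R (AA (2*k) @ [True]) (AA (3*k - 1))" by (rule F3b[OF k1])
      have eb: "int (2*k) - int (2*(k+h)) = int (2*h) * (- 1)" using k1 h1 by (simp add: of_nat_diff)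
      have b0: "R (AA (2*k)) (AA (2*(k+h)))"
        by (rule perdD[OF per _ _ dvdI'[OF eb]]) (use k1 h1 in auto)
      have b: "R (AA (2*k) @ [True]) (AA (2*(k+h)) @ [True])" by (rule sim_ext[OF b0])
      have c: "R (AA (2*(k+h)) @ [True]) (AA (3*(k+h) - 1))" by (rule F3b) (use k1 in auto)
      have ed: "int (3*(k+h) - 1) - int (3*k - 1 + h) = int (2*h) * 1" using k1 h1 by (simp add: of_nat_diff)
      have d: "R (AA (3*(k+h) - 1)) (AA (3*k - 1 + h))"
        by (rule perdD[OF per _ _ dvdI'[OF ed]]) (use k1 h1 in auto)
      have ?thesis using rtrans[OF rsym[OF a] rtrans[OF b rtrans[OF c d]]] yy by simp }
    moreover
    { assume yy: "y = 3*k"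
      have a: "R (AA (2*k) @ [False]) (AA (3*k))" by (rule F3a[OF k1])
      have eb: "int (2*k) - int (2*(k+h)) = int (2*h) * (- 1)" using k1 h1 by (simp add: of_nat_diff)
      have b0: "R (AA (2*k)) (AA (2*(k+h)))"
        by (rule perdD[OF per _ _ dvdI'[OF eb]]) (use k1 h1 in auto)
      have b: "R (AA (2*k) @ [False]) (AA (2*(k+h)) @ [False])" by (rule sim_ext[OF b0])
      have c: "R (AA (2*(k+h)) @ [False]) (AA (3*(k+h)))" by (rule F3a) (use k1 in auto)
      have ed: "int (3*(k+h)) - int (3*k + h) = int (2*h) * 1" using k1 h1 by (simp add: of_nat_diff)
      have d: "R (AA (3*(k+h))) (AA (3*k + h))"
        by (rule perdD[OF per _ _ dvdI'[OF ed]]) (use k1 h1 in auto)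
      have ?thesis using rtrans[OF rsym[OF a] rtrans[OF b rtrans[OF c d]]] yy by simp }
    ultimately show ?thesis using cs by blast
  qed
qed

lemma L2:
  assumes per: "perd K m" and m: "m = 3*q" and od: "odd m" and q1: "1 \<le> q"
  shows "perd K q"
proof -
  have s1: "R (AA (2*k - 1)) (AA (2*(k+q) - 1))" if k: "1 \<le> k" for k
  proof -
    have a: "R (AA (2*k - 1)) (AA (3*k - 2))" by (rule F2[OF k])
    have eb: "int (3*k - 2) - int (3*(k+q) - 2) = int m * (- 1)" using k q1 m by (simp add: of_nat_diff)
    have b: "R (AA (3*k - 2)) (AA (3*(k+q) - 2))"
      by (rule perdD[OF per _ _ dvdI'[OF eb]]) (use k q1 in auto)
    have c: "R (AA (2*(k+q) - 1)) (AA (3*(k+q) - 2))" by (rule F2) (use k in auto)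
    show ?thesis using rtrans[OF a rtrans[OF b rsym[OF c]]] .
  qed
  have s1': "R (AA y) (AA (y + 2*q))" if "1 \<le> y" "odd y" for y
  proof -
    define k where "k = (y + 1) div 2"
    have k1: "1 \<le> k" and yk: "y = 2*k - 1" and yk2: "y + 2*q = 2*(k+q) - 1"
      using that unfolding k_def by presburger+
    show ?thesis using s1[OF k1] yk yk2 by simp
  qed
  have s2: "R (AA y) (AA (y + 2*q))" if y: "1 \<le> y" for y
  proof (cases "odd y")
    case True
    then show ?thesis using s1' y by blast
  next
    case False
    then have oy: "odd (y + m)" using od by simp
    have ea: "int y - int (y + m) = int m * (- 1)" by simp
    have a: "R (AA y) (AA (y + m))"
      by (rule perdD[OF per _ _ dvdI'[OF ea]]) (use y in auto)
    have b: "R (AA (y + m)) (AA (y + m + 2*q))" by (rule s1') (use y oy in auto)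
    have ec: "int (y + m + 2*q) - int (y + 2*q) = int m * 1" by simp
    have c: "R (AA (y + m + 2*q)) (AA (y + 2*q))"
      by (rule perdD[OF per _ _ dvdI'[OF ec]]) (use y in auto)
    show ?thesis using rtrans[OF a rtrans[OF b c]] .
  qed
  have p2: "perd K (2*q)" by (rule perd_shift[OF sg _ s2]) (use q1 in auto)
  show ?thesis
  proof (rule perd_shift[OF sg q1])
    fix y :: nat assume y: "1 \<le> y"
    have ea: "int y - int (y + 4*q) = int (2*q) * (- 2)" by simp
    have a: "R (AA y) (AA (y + 4*q))"
      by (rule perdD[OF p2 _ _ dvdI'[OF ea]]) (use y in auto)
    have eb: "int (y + 4*q) - int (y + q) = int m * 1" using m by simp
    have b: "R (AA (y + 4*q)) (AA (y + q))"
      by (rule perdD[OF per _ _ dvdI'[OF eb]]) (use y in auto)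
    show "R (AA y) (AA (y + q))" using rtrans[OF a b] .
  qed
qed

lemma L3: "perd K m \<Longrightarrow> m = 3*q \<Longrightarrow> 1 \<le> q \<Longrightarrow> perd K q"
proof (induction m arbitrary: q rule: less_induct)
  case (less m)
  show ?case
  proof (cases "even m")
    case True
    have eq: "even q" using True less.prems(2) by simp
    then obtain r where r: "q = 2*r" by (rule evenE)
    have r1: "1 \<le> r" using r less.prems(3) by simp
    have ph: "perd K (3*r)" by (rule L1[of "3*r"]) (use less.prems r r1 in auto)
    have "perd K r" by (rule less.IH[of "3*r"]) (use ph r1 less.prems r in auto)
    then show ?thesis using perd_mult[of K r 2] r by simp
  next
    case False
    then show ?thesis using L2 less.prems by blast
  qed
qed

lemma ABq:
  assumes per: "perd K q" and q1: "1 \<le> q" and x1: "1 \<le> x" and j1: "1 \<le> j"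
    and d: "q dvd (x + j - 1)"
  shows "R (AA x) (BB j)"
proof -
  define s where "s = x + j - 1"
  define x' where "x' = x + (p - 1) * s"
  have ps: "(p - 1) * s + s = p * s" using p1 by (cases p) auto
  have e: "x' + j - 1 = p * s" unfolding x'_def s_def using ps x1 j1 unfolding s_def by linarith
  have 2: "R (AA x') (BB j)" by (rule AB) (use x1 j1 e in \<open>auto simp: x'_def\<close>)
  obtain c where c: "s = q * c" using d unfolding s_def by (auto simp: dvd_def)
  have ea: "int x - int x' = int q * (- (int (p - 1) * int c))" unfolding x'_def c by simp
  have 1: "R (AA x) (AA x')"
    by (rule perdD[OF per _ _ dvdI'[OF ea]]) (use x1 in \<open>auto simp: x'_def\<close>)
  show ?thesis using rtrans[OF 1 2] .
qed

lemma Kq: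
  assumes per: "perd K q" and q1: "1 \<le> q"
  shows "Kconds q K"
  unfolding Kconds_def
proof (intro conjI allI impI)
  fix k :: nat assume k: "1 \<le> k"
  have e: "int k - int (k + q) = int q * (- 1)" by simp
  show "R (AA k) (AA (k + q))" by (rule perdD[OF per _ _ dvdI'[OF e]]) (use k in auto)
next
  fix k :: nat assume k: "1 \<le> k"
  define x where "x = (q - 1) * k + 1"
  have qk: "(q - 1) * k + k = q * k" using q1 by (cases q) auto
  have a: "R (AA x) (BB k)" by (rule ABq[OF per q1]) (use k qk in \<open>auto simp: x_def\<close>)
  have b: "R (AA x) (BB (k + q))"
  proof (rule ABq[OF per q1])
    have "x + (k + q) - 1 = q * (k + 1)" using qk unfolding x_def by simp
    then show "q dvd x + (k + q) - 1" by simp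
  qed (use k in \<open>auto simp: x_def\<close>)
  show "R (BB k) (BB (k + q))" using rtrans[OF rsym[OF a] b] .
next
  fix k :: nat assume k: "1 \<le> k \<and> k \<le> q"
  show "R (AA k) (BB (q + 1 - k))" by (rule ABq[OF per q1]) (use k in auto)
next
  fix k :: nat assume k: "1 \<le> k \<and> k \<le> q"
  have a: "R (AA (2*k) @ [False]) (AA (3*k))" by (rule F3a) (use k in auto)
  have s: "3*k + (1 + 3*(q - k)) - 1 = q * 3" using k by arith
  have b: "R (AA (3*k)) (BB (1 + 3*(q - k)))" by (rule ABq[OF per q1]) (use k s in auto)
  show "R (zeros (2*k) @ [True, False]) (BB (1 + 3*(q - k)))" using rtrans[OF a b] by simp
next
  fix k :: nat assume k: "1 \<le> k \<and> k \<le> q"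
  have a: "R (AA (2*k) @ [True]) (AA (3*k - 1))" by (rule F3b) (use k in auto)
  have s: "3*k - 1 + (2 + 3*(q - k)) - 1 = q * 3" using k by arith
  have b: "R (AA (3*k - 1)) (BB (2 + 3*(q - k)))" by (rule ABq[OF per q1]) (use k s in auto)
  show "R (zeros (2*k) @ [True, True]) (BB (2 + 3*(q - k)))" using rtrans[OF a b] by simp
next
  fix k :: nat assume k: "1 \<le> k \<and> k \<le> q"
  have a: "R (AA (2*k - 1)) (AA (3*k - 2))" by (rule F2) (use k in auto)
  have s: "3*k - 2 + 3*(q - k + 1) - 1 = q * 3" using k by arith
  have b: "R (AA (3*k - 2)) (BB (3*(q - k + 1)))" by (rule ABq[OF per q1]) (use k s in auto)
  show "R (AA (2*k - 1)) (BB (3*(q - k + 1)))" using rtrans[OF a b] .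
qed

end

lemma incl:
  assumes "\<And>K. subgroupF K \<Longrightarrow> Kconds n K \<Longrightarrow> Kconds q K"
  shows "Kpp q \<subseteq> Kpp n"
  unfolding Kpp_def by (rule Inter_anti_mono) (use assms in blast)

theorem lemma3p5:
  fixes n :: nat
  shows "(2 dvd n \<longrightarrow> Kpp (n div 2) \<subseteq> Kpp n) \<and> (3 dvd n \<longrightarrow> Kpp (n div 3) \<subseteq> Kpp n)"
proof (intro conjI impI)
  assume d: "2 dvd n"
  show "Kpp (n div 2) \<subseteq> Kpp n"
  proof (cases "n = 0")
    case True then show ?thesis by simp
  next
    case False
    show ?thesis
    proof (rule incl)
      fix K assume sg: "subgroupF K" and kc: "Kconds n K"
      interpret k: kctx K n using sg kc False by unfold_locales auto
      have q1: "1 \<le> n div 2" using d False by auto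
      have "perd K (2 * (n div 2))" using k.perA d by simp
      then have "perd K (n div 2)" by (rule k.L1[OF _ q1])
      then show "Kconds (n div 2) K" by (rule k.Kq[OF _ q1])
    qed
  qed
next
  assume d: "3 dvd n"
  show "Kpp (n div 3) \<subseteq> Kpp n"
  proof (cases "n = 0")
    case True then show ?thesis by simp
  next
    case False
    show ?thesis
    proof (rule incl)
      fix K assume sg: "subgroupF K" and kc: "Kconds n K"
      interpret k: kctx K n using sg kc False by unfold_locales auto
      have q1: "1 \<le> n div 3" using d False by auto
      have "perd K (n div 3)" by (rule k.L3[OF k.perA]) (use d q1 in auto)
      then show "Kconds (n div 3) K" by (rule k.Kq[OF _ q1])
    qed
  qed
qed

end
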